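(* There is an absolute constant $C>0$ such that for every $\varepsilon\in(0,1/3]$ and every integer $d\ge\log_2(1/\varepsilon)$, there exist an integer $k\le d$ and a monotone function $f:\{\pm1\}^k\to\{\pm1\}$ such that, for $\mathbf x$ uniform on $\{\pm1\}^k$, $$\min_{b\in\{\pm1\}}\Pr[f(\mathbf x)=b]\ge\varepsilon$$ and $$\mathbb E[\mathbf x_1f(\mathbf x)]=\cdots=\mathbb E[\mathbf x_kf(\mathbf x)]\le C\,\varepsilon\log(1/\varepsilon)\cdot\frac{\log d}{d}.$$
   Context: A function $f:\{\pm1\}^k\to\{\pm1\}$ is monotone if $f(x)\le f(y)$ whenever $x_i\le y_i$ for all $i$. *)

theory Defs
  imports Complex_Main
begin

definition cube :: "nat \<Rightarrow> real list set" where
  "cube k = {x. length x = k \<and> set x \<subseteq> {-1, 1}}"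

definition boolean_fun :: "nat \<Rightarrow> (real list \<Rightarrow> real) \<Rightarrow> bool" where
  "boolean_fun k f \<longleftrightarrow> (\<forall>x\<in>cube k. f x \<in> {-1, 1})"

definition monotone_bool :: "nat \<Rightarrow> (real list \<Rightarrow> real) \<Rightarrow> bool" where
  "monotone_bool k f \<longleftrightarrow>
     (\<forall>x\<in>cube k. \<forall>y\<in>cube k. (\<forall>i<k. x ! i \<le> y ! i) \<longrightarrow> f x \<le> f y)"

definition unif_prob :: "nat \<Rightarrow> (real list \<Rightarrow> bool) \<Rightarrow> real" where
  "unif_prob k P = real (card {x\<in>cube k. P x}) / 2 ^ k"

definition unif_exp :: "nat \<Rightarrow> (real list \<Rightarrow> real) \<Rightarrow> real" where
  "unif_exp k g = (\<Sum>x\<in>cube k. g x) / 2 ^ k"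

end

theory Submission
  imports Defs
begin


definition blk :: "nat \<Rightarrow> nat \<Rightarrow> real list \<Rightarrow> real list" where
  "blk w j x = take w (drop (j*w) x)"
definition A :: "nat \<Rightarrow> real list \<Rightarrow> real" where
  "A w y = (if y = replicate w 1 then 1 else 0)"
definition U :: "nat \<Rightarrow> nat \<Rightarrow> real list \<Rightarrow> real" where
  "U m w x = (\<Prod>j<m. (1 - A w (blk w j x)))"

lemma cube_0: "cube 0 = {[]}" by (auto simp: cube_def)

lemma cube_Suc: "cube (Suc n) = Cons (-1) ` cube n \<union> Cons 1 ` cube n"
  by (auto simp: cube_def length_Suc_conv)

lemma finite_cube: "finite (cube n)"
  by (induction n) (auto simp: cube_0 cube_Suc)

lemma sum_cube_Suc: "sum g (cube (Suc n)) = (\<Sum>ys\<in>cube n. g (-1 # ys) + g (1 # ys))"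
proof -
  have "sum g (cube (Suc n)) = sum g (Cons (-1) ` cube n) + sum g (Cons 1 ` cube n)"
    unfolding cube_Suc by (rule sum.union_disjoint) (auto simp: finite_cube)
  also have "\<dots> = (\<Sum>ys\<in>cube n. g (-1 # ys)) + (\<Sum>ys\<in>cube n. g (1 # ys))"
    by (simp add: sum.reindex)
  finally show ?thesis by (simp add: sum.distrib)
qed

lemma card_cube: "real (card (cube n)) = 2^n"
proof (induction n)
  case 0 then show ?case by (simp add: cube_0)
next
  case (Suc n)
  have "real (card (cube (Suc n))) = (\<Sum>x\<in>cube (Suc n). 1)" by simp
  also have "\<dots> = (\<Sum>ys\<in>cube n. 2)" by (subst sum_cube_Suc) simp
  also have "\<dots> = 2 * real (card (cube n))" by simp
  finally show ?case using Suc by simp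
qed

lemma sum_cube_append:
  "sum g (cube (a+b)) = (\<Sum>xs\<in>cube a. \<Sum>ys\<in>cube b. g (xs@ys))"
proof (induction a arbitrary: g)
  case 0 then show ?case by (simp add: cube_0)
next
  case (Suc a)
  have "sum g (cube (Suc a + b)) = (\<Sum>zs\<in>cube (a+b). g (-1 # zs) + g (1 # zs))"
    using sum_cube_Suc[of g "a+b"] by simp
  also have "\<dots> = (\<Sum>xs\<in>cube a. \<Sum>ys\<in>cube b. g (-1 # xs@ys) + g (1 # xs@ys))"
    using Suc[of "\<lambda>zs. g (-1 # zs) + g (1 # zs)"] by simp
  also have "\<dots> = (\<Sum>xs\<in>cube (Suc a). \<Sum>ys\<in>cube b. g (xs@ys))"
    by (subst sum_cube_Suc) (simp add: sum.distrib)
  finally show ?case .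
qed

lemma sum_cube_nth: "t < n \<Longrightarrow> (\<Sum>y\<in>cube n. y!t) = 0"
proof (induction n arbitrary: t)
  case 0 then show ?case by simp
next
  case (Suc n)
  show ?case
  proof (cases t)
    case 0 then show ?thesis by (subst sum_cube_Suc) simp
  next
    case (Suc t')
    then have "t' < n" using Suc.prems by simp
    then show ?thesis using Suc.IH[of t'] \<open>t = Suc t'\<close>
      by (subst sum_cube_Suc) (simp add: sum_distrib_left[symmetric])
  qed
qed

lemma sum_cube_prod:
  fixes g :: "nat \<Rightarrow> real list \<Rightarrow> real"
  shows "(\<Sum>x\<in>cube (m*w). \<Prod>j<m. g j (blk w j x)) = (\<Prod>j<m. \<Sum>y\<in>cube w. g j y)"
proof (induction m arbitrary: g)
  case 0 then show ?case by (simp add: cube_0)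
next
  case (Suc m)
  have "(\<Sum>x\<in>cube (Suc m*w). \<Prod>j<Suc m. g j (blk w j x))
      = (\<Sum>xs\<in>cube w. \<Sum>ys\<in>cube (m*w). \<Prod>j<Suc m. g j (blk w j (xs@ys)))"
    using sum_cube_append[of "\<lambda>x. \<Prod>j<Suc m. g j (blk w j x)" w "m*w"] by simp
  also have "\<dots> = (\<Sum>xs\<in>cube w. \<Sum>ys\<in>cube (m*w). g 0 xs * (\<Prod>j<m. g (Suc j) (blk w j ys)))"
  proof (intro sum.cong refl)
    fix xs ys assume xs: "xs \<in> cube w"
    then have len: "length xs = w" by (simp add: cube_def)
    have "blk w 0 (xs@ys) = xs" using len by (simp add: blk_def)
    moreover have "\<And>j. blk w (Suc j) (xs@ys) = blk w j ys"
      using len by (simp add: blk_def add.commute)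
    ultimately show "(\<Prod>j<Suc m. g j (blk w j (xs@ys))) = g 0 xs * (\<Prod>j<m. g (Suc j) (blk w j ys))"
      by (simp only: prod.lessThan_Suc_shift)
  qed
  also have "\<dots> = (\<Sum>xs\<in>cube w. g 0 xs) * (\<Sum>ys\<in>cube (m*w). \<Prod>j<m. g (Suc j) (blk w j ys))"
    by (simp add: sum_distrib_left sum_distrib_right sum.swap[of _ "cube w"])
  also have "\<dots> = (\<Sum>xs\<in>cube w. g 0 xs) * (\<Prod>j<m. \<Sum>y\<in>cube w. g (Suc j) y)"
    using Suc[of "\<lambda>j. g (Suc j)"] by simp
  also have "\<dots> = (\<Prod>j<Suc m. \<Sum>y\<in>cube w. g j y)"
    by (simp only: prod.lessThan_Suc_shift)
  finally show ?case .
qed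

lemma rep_in_cube: "replicate w 1 \<in> cube w" by (auto simp: cube_def)

lemma sum_A: "(\<Sum>y\<in>cube w. A w y) = 1"
  using rep_in_cube[of w] finite_cube[of w] by (simp add: A_def sum.delta)

lemma sum_xA: "t < w \<Longrightarrow> (\<Sum>y\<in>cube w. y!t * A w y) = 1"
proof -
  assume t: "t < w"
  have "(\<Sum>y\<in>cube w. y!t * A w y) = (\<Sum>y\<in>cube w. if y = replicate w 1 then replicate w 1 ! t else 0)"
    by (intro sum.cong) (auto simp: A_def)
  also have "\<dots> = 1" using rep_in_cube[of w] finite_cube[of w] t by (simp add: sum.delta)
  finally show ?thesis .
qed

lemma U01: "U m w x \<in> {0,1}"
  unfolding U_def by (induction m) (auto simp: A_def)

lemma sum_U: "(\<Sum>x\<in>cube (m*w). U m w x) = (2^w - 1)^m"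
proof -
  have "(\<Sum>x\<in>cube (m*w). U m w x) = (\<Prod>j<m. \<Sum>y\<in>cube w. 1 - A w y)"
    unfolding U_def by (rule sum_cube_prod)
  also have "\<dots> = (\<Prod>j<m. (2^w - 1::real))"
    using card_cube[of w] sum_A[of w] by (simp add: sum_subtractf)
  finally show ?thesis by simp
qed

lemma blk_nth:
  assumes "length x = m*w" "i < m*w"
  shows "blk w (i div w) x ! (i mod w) = x ! i" "i div w < m"
proof -
  have wpos: "w > 0" using assms by (cases w) auto
  have "i mod w < w" using wpos by simp
  moreover have "i div w * w + i mod w = i" by simp
  moreover have "i div w * w \<le> length x" using assms
    by (metis div_mult_mod_eq le_add1 less_imp_le_nat order_trans)
  ultimately show "blk w (i div w) x ! (i mod w) = x ! i"
    using assms by (simp add: blk_def nth_take nth_drop)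
  show "i div w < m" using assms wpos
    by (simp add: less_mult_imp_div_less)
qed

lemma sum_xU:
  assumes i: "i < m*w"
  shows "(\<Sum>x\<in>cube (m*w). x!i * U m w x) = - ((2^w - 1)^(m-1))"
proof -
  define j0 where "j0 = i div w"
  define t where "t = i mod w"
  have wpos: "w > 0" using i by (cases w) auto
  have j0: "j0 < m" using blk_nth(2)[of "replicate (m*w) 0" m w i] i by (simp add: j0_def)
  have t: "t < w" using wpos by (simp add: t_def)
  define h where "h j = (if j = j0 then (\<lambda>y. y!t * (1 - A w y)) else (\<lambda>y. 1 - A w y))" for j
  have eq: "x!i * U m w x = (\<Prod>j<m. h j (blk w j x))" if x: "x \<in> cube (m*w)" for x
  proof -
    have len: "length x = m*w" using x by (simp add: cube_def)
    have "(\<Prod>j<m. h j (blk w j x)) = h j0 (blk w j0 x) * (\<Prod>j\<in>{..<m}-{j0}. h j (blk w j x))"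
      using j0 by (simp add: prod.remove)
    also have "(\<Prod>j\<in>{..<m}-{j0}. h j (blk w j x)) = (\<Prod>j\<in>{..<m}-{j0}. 1 - A w (blk w j x))"
      by (intro prod.cong) (auto simp: h_def)
    finally have 1: "(\<Prod>j<m. h j (blk w j x)) = blk w j0 x ! t * (1 - A w (blk w j0 x)) * (\<Prod>j\<in>{..<m}-{j0}. 1 - A w (blk w j x))"
      by (simp add: h_def)
    have 2: "U m w x = (1 - A w (blk w j0 x)) * (\<Prod>j\<in>{..<m}-{j0}. 1 - A w (blk w j x))"
      unfolding U_def using j0 by (simp add: prod.remove)
    show ?thesis using 1 2 blk_nth(1)[OF len i] by (simp add: j0_def t_def)
  qed
  have "(\<Sum>x\<in>cube (m*w). x!i * U m w x) = (\<Sum>x\<in>cube (m*w). \<Prod>j<m. h j (blk w j x))"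
    by (intro sum.cong refl eq)
  also have "\<dots> = (\<Prod>j<m. \<Sum>y\<in>cube w. h j y)" by (rule sum_cube_prod)
  also have "\<dots> = (\<Sum>y\<in>cube w. h j0 y) * (\<Prod>j\<in>{..<m}-{j0}. \<Sum>y\<in>cube w. h j y)"
    using j0 by (simp add: prod.remove)
  also have "(\<Sum>y\<in>cube w. h j0 y) = -1"
    using sum_cube_nth[OF t] sum_xA[OF t]
    by (simp add: h_def algebra_simps sum_subtractf)
  also have "(\<Prod>j\<in>{..<m}-{j0}. \<Sum>y\<in>cube w. h j y) = (\<Prod>j\<in>{..<m}-{j0}. (2^w - 1::real))"
    using card_cube[of w] sum_A[of w] by (intro prod.cong) (auto simp: h_def sum_subtractf)
  also have "\<dots> = (2^w-1)^(m-1)" using j0 by simp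
  finally show ?thesis by simp
qed



lemma idx_le: "j < m \<Longrightarrow> j*w + w \<le> m*(w::nat)"
proof -
  assume "j < m"
  then have "Suc j * w \<le> m*w" by (intro mult_le_mono1) simp
  then show ?thesis by (simp add: add.commute)
qed

lemma blk_len: "length x = m*w \<Longrightarrow> j < m \<Longrightarrow> length (blk w j x) = w"
  using idx_le[of j m w] by (simp add: blk_def)

lemma blk_nth2: "length x = m*w \<Longrightarrow> j < m \<Longrightarrow> t < w \<Longrightarrow> blk w j x ! t = x ! (j*w+t)"
  using idx_le[of j m w] by (simp add: blk_def nth_take nth_drop)

lemma idx_lt: "j < m \<Longrightarrow> t < w \<Longrightarrow> j*w+t < m*(w::nat)"
  using idx_le[of j m w] by simp

lemma U_mono:
  assumes x: "x \<in> cube (m*w)" and y: "y \<in> cube (m*w)" and le: "\<forall>i<m*w. x!i \<le> y!i"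
  shows "U m w y \<le> U m w x"
  unfolding U_def
proof (rule prod_mono)
  fix j assume j: "j \<in> {..<m}"
  have lx: "length x = m*w" and ly: "length y = m*w" and sy: "set y \<subseteq> {-1,1}"
    using x y by (auto simp: cube_def)
  have "blk w j y = replicate w 1" if h: "blk w j x = replicate w 1"
  proof (rule nth_equalityI)
    show "length (blk w j y) = length (replicate w 1)" using blk_len[OF ly] j by simp
    fix t assume "t < length (blk w j y)"
    then have t: "t < w" using blk_len[OF ly] j by simp
    have "x ! (j*w+t) = 1" using h blk_nth2[OF lx _ t, of j] j t
      by (metis lessThan_iff nth_replicate)
    moreover have "x ! (j*w+t) \<le> y ! (j*w+t)" using le idx_lt[of j m t w] j t by auto
    moreover have "y ! (j*w+t) \<in> {-1,1}" using sy idx_lt[of j m t w] j t ly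
      by (metis lessThan_iff nth_mem subsetD)
    ultimately have "y ! (j*w+t) = 1" by auto
    then show "blk w j y ! t = replicate w 1 ! t" using blk_nth2[OF ly _ t, of j] j t by simp
  qed
  then show "0 \<le> 1 - A w (blk w j y) \<and> 1 - A w (blk w j y) \<le> 1 - A w (blk w j x)"
    by (auto simp: A_def)
qed

definition tribes :: "nat \<Rightarrow> nat \<Rightarrow> real list \<Rightarrow> real" where
  "tribes m w x = 1 - 2 * U m w x"

lemma card_filter_real:
  "real (card {x\<in>S. P x}) = (\<Sum>x\<in>S. if P x then 1 else 0)" if "finite S"
  using that by (simp add: sum.inter_filter[symmetric])

lemma tribes_props:
  assumes "m \<ge> 1" "w \<ge> 1"
  shows "boolean_fun (m*w) (tribes m w)"
    "monotone_bool (m*w) (tribes m w)"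
    "unif_prob (m*w) (\<lambda>x. tribes m w x = -1) = ((2^w-1)/2^w)^m"
    "unif_prob (m*w) (\<lambda>x. tribes m w x = 1) = 1 - ((2^w-1)/2^w)^m"
    "\<And>i. i < m*w \<Longrightarrow> unif_exp (m*w) (\<lambda>x. x ! i * tribes m w x) = 2 * (2^w-1)^(m-1) / (2^w)^m"
proof -
  show "boolean_fun (m*w) (tribes m w)"
    unfolding boolean_fun_def tribes_def
  proof
    fix x show "1 - 2 * U m w x \<in> {-1, 1}" using U01[of m w x] by auto
  qed
  show "monotone_bool (m*w) (tribes m w)"
    unfolding monotone_bool_def tribes_def
  proof (intro ballI impI)
    fix x y assume "x \<in> cube (m*w)" "y \<in> cube (m*w)" "\<forall>i<m*w. x ! i \<le> y ! i"
    from U_mono[OF this] show "1 - 2 * U m w x \<le> 1 - 2 * U m w y" by simp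
  qed
  have pw: "(2::real)^(m*w) = (2^w)^m" by (metis power_mult mult.commute)
  have ind1: "(if tribes m w x = -1 then 1 else 0) = U m w x" for x
    using U01[of m w x] by (auto simp: tribes_def)
  have ind2: "(if tribes m w x = 1 then 1 else 0) = 1 - U m w x" for x
    using U01[of m w x] by (auto simp: tribes_def)
  show "unif_prob (m*w) (\<lambda>x. tribes m w x = -1) = ((2^w-1)/2^w)^m"
    unfolding unif_prob_def card_filter_real[OF finite_cube] ind1 sum_U pw
    by (simp add: power_divide)
  have "(\<Sum>x\<in>cube (m*w). 1 - U m w x) = 2^(m*w) - (2^w-1)^m"
    using card_cube[of "m*w"] by (simp add: sum_subtractf sum_U)
  then have "unif_prob (m*w) (\<lambda>x. tribes m w x = 1) = ((2^w)^m - (2^w-1)^m)/(2^w)^m"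
    unfolding unif_prob_def card_filter_real[OF finite_cube] ind2 by (simp add: pw)
  also have "\<dots> = 1 - (2^w-1)^m/(2^w)^m" by (simp add: diff_divide_distrib)
  also have "\<dots> = 1 - ((2^w-1)/2^w)^m" by (simp only: power_divide)
  finally show "unif_prob (m*w) (\<lambda>x. tribes m w x = 1) = 1 - ((2^w-1)/2^w)^m" .
  fix i assume i: "i < m*w"
  have "(\<Sum>x\<in>cube (m*w). x ! i * tribes m w x) = (\<Sum>x\<in>cube (m*w). x!i) - 2 * (\<Sum>x\<in>cube (m*w). x!i * U m w x)"
    by (simp add: tribes_def algebra_simps sum_subtractf sum_distrib_left)
  also have "\<dots> = 2 * (2^w-1)^(m-1)" using sum_cube_nth[OF i] sum_xU[OF i] by simp
  finally show "unif_exp (m*w) (\<lambda>x. x ! i * tribes m w x) = 2 * (2^w-1)^(m-1) / (2^w)^m"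
    unfolding unif_exp_def pw by simp
qed



lemma ln2_ge: "ln (2::real) \<ge> 1/2"
proof -
  have "exp (1/2::real) * exp (1/2) = exp 1" by (simp add: exp_add[symmetric])
  also have "\<dots> \<le> 3" by (rule exp_le)
  finally have "exp (1/2::real) ^ 2 \<le> 2^2" by (simp add: power2_eq_square)
  then have "exp (1/2::real) \<le> 2" by (rule power2_le_imp_le) simp
  then have "ln (exp (1/2::real)) \<le> ln 2" by (subst ln_le_cancel_iff) auto
  then show ?thesis by simp
qed
lemma ln3_ge: "ln (3::real) \<ge> 1"
proof -
  have "ln (exp 1) \<le> ln (3::real)" using exp_le by (subst ln_le_cancel_iff) auto
  then show ?thesis by simp
qed

lemma ab_bound:
  fixes a b :: real assumes "a \<ge> 1/2" "b \<ge> 1" shows "a + b \<le> 3*a*b"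
proof -
  have "a*(3*b-1) \<ge> (1/2)*(3*b-1)" by (rule mult_right_mono) (use assms in auto)
  then have "3*b/2 - 1/2 \<le> 3*(a*b) - a" by (simp add: algebra_simps)
  then have "a + b \<le> 3*(a*b)" using assms by linarith
  then show ?thesis by (simp add: mult.assoc)
qed

theorem proposition4p5:
  shows "\<exists>C::real. C > 0 \<and>
    (\<forall>\<epsilon>::real. 0 < \<epsilon> \<and> \<epsilon> \<le> 1/3 \<longrightarrow>
      (\<forall>d::nat. real d \<ge> log 2 (1/\<epsilon>) \<longrightarrow>
        (\<exists>k::nat. k \<le> d \<and>
          (\<exists>f :: real list \<Rightarrow> real.
             boolean_fun k f \<and> monotone_bool k f \<and>
             (\<forall>b\<in>{-1, 1::real}. unif_prob k (\<lambda>x. f x = b) \<ge> \<epsilon>) \<and>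
             (\<forall>i<k. unif_exp k (\<lambda>x. x ! i * f x) = unif_exp k (\<lambda>x. x ! 0 * f x)) \<and>
             (\<forall>i<k. unif_exp k (\<lambda>x. x ! i * f x)
                     \<le> C * \<epsilon> * ln (1/\<epsilon>) * (ln (real d) / real d))))))"
proof (intro exI[of _ "100::real"] conjI allI impI)
  show "(100::real) > 0" by simp
next
  fix \<epsilon> :: real and d :: nat
  assume "0 < \<epsilon> \<and> \<epsilon> \<le> 1/3"
  then have e0: "0 < \<epsilon>" and e3: "\<epsilon> \<le> 1/3" by auto
  assume hd: "real d \<ge> log 2 (1/\<epsilon>)"
  have h2d: "1/\<epsilon> \<le> 2^d"
  proof -
    have "1/\<epsilon> = 2 powr (log 2 (1/\<epsilon>))" using e0 by simp
    also have "\<dots> \<le> 2 powr (real d)" by (rule powr_mono[OF hd]) simp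
    also have "\<dots> = 2^d" by (simp add: powr_realpow)
    finally show ?thesis .
  qed
  have "1/\<epsilon> \<ge> 3" using e0 e3 by (simp add: field_simps)
  then have d2: "d \<ge> 2" using h2d
    by (cases d; cases "d - 1"; auto)
  define M where "M w = nat \<lceil>2*\<epsilon>*2^w\<rceil>" for w :: nat
  have Mge: "real (M w) \<ge> 2*\<epsilon>*2^w" for w unfolding M_def by linarith
  have Mlt: "real (M w) < 2*\<epsilon>*2^w + 1" for w
  proof -
    have "2*\<epsilon>*2^w > 0" using e0 by simp
    then show ?thesis unfolding M_def by linarith
  qed
  have M1: "M w \<ge> 1" for w
  proof -
    have "2*\<epsilon>*2^w > 0" using e0 by simp
    then show ?thesis unfolding M_def by linarith
  qed
  define W where "W = {w. 1 \<le> w \<and> M w * w \<le> d}"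
  have Wsub: "W \<subseteq> {..d}"
  proof
    fix w assume "w \<in> W"
    then have "M w * w \<le> d" by (simp add: W_def)
    moreover have "w \<le> M w * w" using mult_le_mono1[OF M1[of w], of w] by simp
    ultimately show "w \<in> {..d}" by (metis atMost_iff le_trans)
  qed
  have finW: "finite W" using Wsub finite_subset by blast
  have "M 1 \<le> 2"
  proof -
    have "2*\<epsilon>*2^1 \<le> 2" using e3 by simp
    then show ?thesis unfolding M_def by linarith
  qed
  then have "1 \<in> W" using d2 by (simp add: W_def)
  define w where "w = Max W"
  have wW: "w \<in> W" unfolding w_def using finW \<open>1 \<in> W\<close> Max_in by blast
  then have w1: "w \<ge> 1" and wd: "M w * w \<le> d" by (auto simp: W_def)
  have "Suc w \<notin> W" using Max_ge[OF finW] w_def by fastforce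
  then have sw: "M (Suc w) * Suc w > d" by (simp add: W_def)
  define N where "N = (2::real)^w"
  have N2: "N \<ge> 2" unfolding N_def using w1
    by (metis power_one_right power_increasing one_le_numeral)
  have wled: "w \<le> d" using wW Wsub by auto
  have c1: "4*\<epsilon>*N \<ge> 1"
  proof (rule ccontr)
    assume "\<not> 4*\<epsilon>*N \<ge> 1"
    then have lt: "4*\<epsilon>*N < 1" by simp
    have "M (Suc w) = 1"
    proof -
      have "2*\<epsilon>*2^(Suc w) = 4*\<epsilon>*N" by (simp add: N_def)
      then have "2*\<epsilon>*2^(Suc w) < 1" "2*\<epsilon>*2^(Suc w) > 0" using lt e0 by auto
      then show ?thesis unfolding M_def by linarith
    qed
    then have "w = d" using sw wled by simp
    then have "\<epsilon> * N \<ge> 1" using h2d e0 by (simp add: N_def field_simps)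
    then show False using lt e0 by linarith
  qed
  have c2: "real d < 8*\<epsilon>*N*(w+1)"
  proof -
    have "real d < real (M (Suc w)) * real (Suc w)" using sw by (metis of_nat_less_iff of_nat_mult)
    also have "\<dots> \<le> (4*\<epsilon>*N + 1) * real (Suc w)"
      using Mlt[of "Suc w"] by (intro mult_right_mono) (auto simp: N_def)
    also have "\<dots> \<le> (8*\<epsilon>*N) * real (Suc w)"
      by (intro mult_right_mono) (use c1 in linarith, simp)
    finally show ?thesis by simp
  qed
  have c3: "2*\<epsilon>*N \<le> real d"
  proof -
    have "2*\<epsilon>*N \<le> real (M w)" using Mge by (simp add: N_def)
    also have "\<dots> \<le> real (M w * w)"
    proof -
      have "M w * 1 \<le> M w * w" using w1 by (rule mult_le_mono2)
      then show ?thesis by (metis of_nat_le_iff mult_1_right)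
    qed
    also have "\<dots> \<le> real d" using wd by linarith
    finally show ?thesis .
  qed
  have dpos: "real d > 0" using d2 by simp
  have c4: "real (w+1) * ln 2 \<le> ln (real d) + ln (1/\<epsilon>)"
  proof -
    have "(2::real)^(w+1) \<le> real d / \<epsilon>" using c3 e0 by (simp add: N_def field_simps)
    then have "ln ((2::real)^(w+1)) \<le> ln (real d / \<epsilon>)"
      by (subst ln_le_cancel_iff) (use e0 dpos in auto)
    then show ?thesis using e0 dpos by (simp add: ln_realpow ln_div ln_mult algebra_simps)
  qed
  have a_ge: "ln (real d) \<ge> 1/2"
  proof -
    have "ln (real d) \<ge> ln 2" using d2 by (subst ln_le_cancel_iff) auto
    then show ?thesis using ln2_ge by linarith
  qed
  have b_ge: "ln (1/\<epsilon>) \<ge> 1"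
  proof -
    have "ln (1/\<epsilon>) \<ge> ln 3" using \<open>1/\<epsilon> \<ge> 3\<close> e0 by (subst ln_le_cancel_iff) auto
    then show ?thesis using ln3_ge by linarith
  qed
  have c5: "real (w+1) \<le> 6 * ln (real d) * ln (1/\<epsilon>)"
  proof -
    have "real (w+1) * (1/2) \<le> real (w+1) * ln 2" using ln2_ge by (intro mult_left_mono) auto
    then have "real (w+1) * (1/2) \<le> ln (real d) + ln (1/\<epsilon>)" using c4 by (rule order_trans)
    moreover have gen: "\<And>x y::real. x*(1/2) \<le> y \<Longrightarrow> x \<le> 2*y" by linarith
    ultimately have "real (w+1) \<le> 2 * (ln (real d) + ln (1/\<epsilon>))" by blast
    moreover have "ln (real d) + ln (1/\<epsilon>) \<le> 3 * (ln (real d) * ln (1/\<epsilon>))"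
      using ab_bound[OF a_ge b_ge] by (simp add: mult.assoc)
    moreover have gen2: "\<And>x s p::real. x \<le> 2*s \<Longrightarrow> s \<le> 3*p \<Longrightarrow> x \<le> 6*p" by linarith
    ultimately have "real (w+1) \<le> 6 * (ln (real d) * ln (1/\<epsilon>))" by blast
    then show ?thesis by (simp add: mult.assoc)
  qed
  define r where "r = (N-1)/N"
  have r_half: "r \<ge> 1/2" and r1: "r \<le> 1" and r0: "r \<ge> 0" using N2 by (auto simp: r_def field_simps)
  define P where "P m \<longleftrightarrow> r^m \<le> 1 - \<epsilon>" for m
  have PM: "P (M w)"
  proof -
    have rN: "r * (1 + 1/N) = 1 - 1/N^2" using N2 by (simp add: r_def field_simps power2_eq_square)
    have "0 \<le> 1 - 1/N^2" "1 - 1/N^2 \<le> 1" using N2 by (auto simp: field_simps)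
    then have "(r * (1+1/N))^(M w) \<le> 1" unfolding rN by (rule power_le_one)
    then have A1: "r^(M w) * (1+1/N)^(M w) \<le> 1" by (simp add: power_mult_distrib)
    have "1 + real (M w) * (1/N) \<le> (1+1/N)^(M w)"
    proof (rule Bernoulli_inequality)
      have "0 \<le> 1/N" using N2 by simp
      then show "-1 \<le> 1/N" by linarith
    qed
    moreover have "real (M w) * (1/N) \<ge> 2*\<epsilon>" using Mge[of w] N2 by (simp add: N_def field_simps)
    ultimately have A2: "(1+1/N)^(M w) \<ge> 1 + 2*\<epsilon>" by linarith
    have "r^(M w) * (1 + 2*\<epsilon>) \<le> r^(M w) * (1+1/N)^(M w)"
      using A2 r0 by (intro mult_left_mono) auto
    then have "r^(M w) * (1 + 2*\<epsilon>) \<le> 1" using A1 by linarith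
    moreover have "(1-\<epsilon>)*(1+2*\<epsilon>) \<ge> 1"
    proof -
      have "\<epsilon>*(1-2*\<epsilon>) \<ge> 0" using e0 e3 by simp
      moreover have "(1-\<epsilon>)*(1+2*\<epsilon>) = 1 + \<epsilon>*(1-2*\<epsilon>)" by (simp add: algebra_simps)
      ultimately show ?thesis by linarith
    qed
    ultimately have "r^(M w) * (1+2*\<epsilon>) \<le> (1-\<epsilon>)*(1+2*\<epsilon>)" by linarith
    then have "r^(M w) \<le> 1 - \<epsilon>" using e0 by (simp add: mult_le_cancel_right)
    then show ?thesis by (simp add: P_def)
  qed
  define m where "m = (LEAST m. P m)"
  have Pm: "P m" unfolding m_def using PM by (rule LeastI)
  have mM: "m \<le> M w" unfolding m_def using PM by (rule Least_le)
  have m1: "m \<ge> 1"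
  proof (rule ccontr)
    assume "\<not> m \<ge> 1" then have "m = 0" by simp
    then show False using Pm e0 by (simp add: P_def)
  qed
  have notP: "\<not> P (m-1)" unfolding m_def by (rule not_less_Least) (use m1 m_def in auto)
  have rm: "r^m \<le> 1 - \<epsilon>" using Pm by (simp add: P_def)
  have rm1: "r^(m-1) > 1 - \<epsilon>" using notP by (simp add: P_def)
  have mpow: "r^m = r * r^(m-1)" using m1 by (metis Suc_diff_1 less_le_trans zero_less_one power_Suc)
  have rmeps: "r^m \<ge> \<epsilon>"
  proof -
    have "r * r^(m-1) \<ge> (1/2) * (1-\<epsilon>)"
      using r_half rm1 e3 by (intro mult_mono) auto
    then have "r^m \<ge> (1/2) * (1-\<epsilon>)" by (simp only: mpow)
    moreover have gen3: "x \<ge> \<epsilon>" if "x \<ge> (1/2) * (1-\<epsilon>)" for x using e3 that by argo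
    ultimately show ?thesis by blast
  qed
  have kd: "m*w \<le> d" by (rule le_trans[OF mult_le_mono1[OF mM] wd])
  note TP = tribes_props[OF m1 w1]
  have rdef: "(2^w - 1)/2^w = r" by (simp only: r_def N_def)
  define V where "V = 2 * (2^w-1)^(m-1) / ((2::real)^w)^m"
  have V_le: "V \<le> 2/N"
  proof -
    have "(N-1)^(m-1) \<le> N^(m-1)" using N2 by (intro power_mono) auto
    then have "2 * (N-1)^(m-1) / N^m \<le> 2 * N^(m-1) / N^m" using N2 by (intro divide_right_mono) auto
    then have "V \<le> 2 * N^(m-1) / N^m" by (simp add: V_def N_def)
    also have "N^m = N * N^(m-1)" using m1 by (metis Suc_diff_1 less_le_trans zero_less_one power_Suc)
    also have "2 * N^(m-1) / (N * N^(m-1)) = 2/N" using N2 by simp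
    finally show ?thesis .
  qed
  have V_bound: "V \<le> 100 * \<epsilon> * ln (1/\<epsilon>) * (ln (real d) / real d)"
  proof -
    have "2 * real d \<le> 16*\<epsilon>*real (w+1) * N" using c2 by (simp add: algebra_simps)
    then have "2/N \<le> 16*\<epsilon>*real (w+1)/real d" using N2 dpos
      by (simp add: divide_le_eq le_divide_eq mult.commute mult.left_commute)
    also have "\<dots> \<le> 16*\<epsilon>*(6 * ln (real d) * ln (1/\<epsilon>))/real d"
      using c5 e0 dpos by (intro divide_right_mono mult_left_mono) auto
    also have "\<dots> = 96 * (\<epsilon> * ln (1/\<epsilon>) * (ln (real d) / real d))" by simp
    also have "\<dots> \<le> 100 * (\<epsilon> * ln (1/\<epsilon>) * (ln (real d) / real d))"
    proof (rule mult_right_mono)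
      show "0 \<le> \<epsilon> * ln (1/\<epsilon>) * (ln (real d) / real d)"
        using e0 e3 dpos a_ge b_ge by (intro mult_nonneg_nonneg divide_nonneg_pos) auto
    qed simp
    finally show ?thesis using V_le by simp
  qed
  have P1: "\<forall>b\<in>{-1, 1::real}. unif_prob (m*w) (\<lambda>x. tribes m w x = b) \<ge> \<epsilon>"
  proof
    fix b :: real assume "b \<in> {-1, 1}"
    then have "b = -1 \<or> b = 1" by simp
    then show "unif_prob (m*w) (\<lambda>x. tribes m w x = b) \<ge> \<epsilon>"
    proof
      assume "b = -1"
      then show ?thesis using TP(3) rmeps unfolding rdef by simp
    next
      assume "b = 1"
      then have "unif_prob (m*w) (\<lambda>x. tribes m w x = b) = 1 - r^m" using TP(4) unfolding rdef by simp
      then show ?thesis using rm by linarith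
    qed
  qed
  have "0 < m*w" using m1 w1 by simp
  have P2: "\<forall>i<m*w. unif_exp (m*w) (\<lambda>x. x ! i * tribes m w x) = unif_exp (m*w) (\<lambda>x. x ! 0 * tribes m w x)"
  proof (intro allI impI)
    fix i assume i: "i < m*w"
    show "unif_exp (m*w) (\<lambda>x. x ! i * tribes m w x) = unif_exp (m*w) (\<lambda>x. x ! 0 * tribes m w x)"
      using TP(5)[OF i] TP(5)[OF \<open>0 < m*w\<close>] by (simp only:)
  qed
  have P3: "\<forall>i<m*w. unif_exp (m*w) (\<lambda>x. x ! i * tribes m w x) \<le> 100 * \<epsilon> * ln (1/\<epsilon>) * (ln (real d) / real d)"
  proof (intro allI impI)
    fix i assume i: "i < m*w"
    show "unif_exp (m*w) (\<lambda>x. x ! i * tribes m w x) \<le> 100 * \<epsilon> * ln (1/\<epsilon>) * (ln (real d) / real d)"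
      using TP(5)[OF i] V_bound unfolding V_def by (simp only:)
  qed
  show "\<exists>k\<le>d. \<exists>f. boolean_fun k f \<and> monotone_bool k f \<and>
             (\<forall>b\<in>{-1, 1::real}. unif_prob k (\<lambda>x. f x = b) \<ge> \<epsilon>) \<and>
             (\<forall>i<k. unif_exp k (\<lambda>x. x ! i * f x) = unif_exp k (\<lambda>x. x ! 0 * f x)) \<and>
             (\<forall>i<k. unif_exp k (\<lambda>x. x ! i * f x)
                     \<le> 100 * \<epsilon> * ln (1/\<epsilon>) * (ln (real d) / real d))"
    apply (rule exI[where x="m*w"])
    apply (rule conjI[OF kd])
    apply (rule exI[where x="tribes m w"])
    using TP(1) TP(2) P1 P2 P3 by (intro conjI)
qed

end
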